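(* In the construction described in the context, for every $k\in\{1,\dots,t-1\}$ and every set $\mathcal{A}\subseteq\{1,\dots,t-1\}$ of indices with $|\mathcal{A}|=k$, there exist at least $k$ distinct edges of $F\cap T$ each of which crosses at least one of the complete cuts $C_G(X_i)$, $i\in\mathcal{A}$.
   Context: Setting: $G=(V,E)$ is a connected finite undirected graph (parallel edges allowed), $w:E\to\mathbb{R}_{\ge0}$ edge weights, $c:E\to\mathbb{R}_{>0}$ edge costs, $n=|V|$. For $S\subseteq V$, $C_G(S)=\{e\in E:|e\cap S|=1\}$ (complete cut; its edges cross it) and $C_G(S,W)=\{e\in C_G(S):w(e)<W\}$ (partial cut). $F\subseteq E$ is a set with $G'=G\setminus F=(V,E\setminus F)$ connected; $B=c(F)$ and $\Delta=\mathrm{MST}(G')-\mathrm{MST}(G)$ (MST weights w.r.t. $w$). Construction: let $T$ be a minimum spanning tree of $G$ and $T\cap F=\{e_1,\dots,e_{t-1}\}$, with $t\ge2$. Removing these edges splits $T$ into components with vertex sets $A_1,\dots,A_t$ (a partition of $V$). Let $G'_{cc}$ be the multigraph with vertex set $V_{cc}=\{A_1,\dots,A_t\}$ having, for every edge $\{u,v\}\in E\setminus F$ with $u\in A_i$, $v\in A_j$, an edge between $A_i$ and $A_j$ of weight $w(\{u,v\})$ (identified with the original edge). Let $T'_{cc}$ be a minimum spanning tree of $G'_{cc}$, with edges $e'_1,\dots,e'_{t-1}$ indexed so that $w(e'_1)\le\dots\le w(e'_{t-1})$ (ties broken arbitrarily). For each $i$, deleting $e'_i,e'_{i+1},\dots,e'_{t-1}$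 from $T'_{cc}$ leaves a forest in which $e'_i$ joins two components $L_i,R_i\subseteq V_{cc}$. Counters $k(A)=0$ for all $A\in V_{cc}$ initially, and $k(S)=\max_{A\in S}k(A)$. For $i=1,\dots,t-1$ in order: set $X_i=L_i$ if $k(L_i)\le k(R_i)$, else $X_i=R_i$; then increase $k(A)$ by $1$ for every $A\in X_i$. Identifying a set of vertices of $G'_{cc}$ with the union of the corresponding vertex sets in $V$, define $C_i=C_G(X_i,w(e'_i))$. *)

theory Defs
  imports Complex_Main
begin

text \<open>Multigraphs: a vertex set and a set of edge identifiers with an endpoint map
  (each edge of G has exactly two endpoints; parallel edges allowed).\<close>

definition adj :: "('e \<Rightarrow> 'v set) \<Rightarrow> 'e set \<Rightarrow> ('v \<times> 'v) set" where
  "adj ends Es = {(u, v). \<exists>e\<in>Es. ends e = {u, v}}"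

definition connected_graph :: "'v set \<Rightarrow> ('e \<Rightarrow> 'v set) \<Rightarrow> 'e set \<Rightarrow> bool" where
  "connected_graph Vs ends Es \<longleftrightarrow> (\<forall>x\<in>Vs. \<forall>y\<in>Vs. (x, y) \<in> (adj ends Es)\<^sup>*)"

definition comp_of :: "'v set \<Rightarrow> ('e \<Rightarrow> 'v set) \<Rightarrow> 'e set \<Rightarrow> 'v \<Rightarrow> 'v set" where
  "comp_of Vs ends Es x = {y\<in>Vs. (x, y) \<in> (adj ends Es)\<^sup>*}"

definition spanning_tree :: "'v set \<Rightarrow> ('e \<Rightarrow> 'v set) \<Rightarrow> 'e set \<Rightarrow> 'e set \<Rightarrow> bool" where
  "spanning_tree Vs ends Es T \<longleftrightarrow> T \<subseteq> Es \<and> connected_graph Vs ends T \<and>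
     (\<forall>T'. T' \<subset> T \<longrightarrow> \<not> connected_graph Vs ends T')"

definition is_MST :: "'v set \<Rightarrow> ('e \<Rightarrow> 'v set) \<Rightarrow> 'e set \<Rightarrow> ('e \<Rightarrow> real) \<Rightarrow> 'e set \<Rightarrow> bool" where
  "is_MST Vs ends Es w T \<longleftrightarrow> spanning_tree Vs ends Es T \<and>
     (\<forall>T'. spanning_tree Vs ends Es T' \<longrightarrow> sum w T \<le> sum w T')"

definition crosses :: "('e \<Rightarrow> 'v set) \<Rightarrow> 'v set \<Rightarrow> 'e \<Rightarrow> bool" where
  "crosses ends S e \<longleftrightarrow> card (ends e \<inter> S) = 1"

definition kmax :: "('a \<Rightarrow> nat) \<Rightarrow> 'a set \<Rightarrow> nat" where
  "kmax k S = Max (k ` S)"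

text \<open>Counters after steps 1..i of the process; step i+1 selects X_(i+1) from L, R.\<close>
primrec kcnt :: "(nat \<Rightarrow> 'a set) \<Rightarrow> (nat \<Rightarrow> 'a set) \<Rightarrow> nat \<Rightarrow> 'a \<Rightarrow> nat" where
  "kcnt L R 0 A = 0"
| "kcnt L R (Suc i) A = kcnt L R i A +
     (if A \<in> (if kmax (kcnt L R i) (L (Suc i)) \<le> kmax (kcnt L R i) (R (Suc i))
              then L (Suc i) else R (Suc i)) then 1 else 0)"

text \<open>X_i for i \<ge> 1, chosen with the counters after steps 1..i-1.\<close>
definition Xsel :: "(nat \<Rightarrow> 'a set) \<Rightarrow> (nat \<Rightarrow> 'a set) \<Rightarrow> nat \<Rightarrow> 'a set" where
  "Xsel L R i = (if kmax (kcnt L R (i - 1)) (L i) \<le> kmax (kcnt L R (i - 1)) (R i)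
                 then L i else R i)"

end

theory Submission
  imports Defs
begin


lemma adj_sym: "(u,v) \<in> adj f Es \<Longrightarrow> (v,u) \<in> adj f Es"
  by (auto simp: adj_def insert_commute)

lemma rtr_sym: "(u,v) \<in> (adj f Es)\<^sup>* \<Longrightarrow> (v,u) \<in> (adj f Es)\<^sup>*"
proof -
  have "sym (adj f Es)" by (rule symI, rule adj_sym)
  hence "sym ((adj f Es)\<^sup>*)" by (rule sym_rtrancl)
  thus "(u,v) \<in> (adj f Es)\<^sup>* \<Longrightarrow> (v,u) \<in> (adj f Es)\<^sup>*" unfolding sym_def by blast
qed

lemma adj_mono: "Es \<subseteq> Es' \<Longrightarrow> adj f Es \<subseteq> adj f Es'"
  by (auto simp: adj_def)

lemma rtr_mono: "Es \<subseteq> Es' \<Longrightarrow> (x,y) \<in> (adj f Es)\<^sup>* \<Longrightarrow> (x,y) \<in> (adj f Es')\<^sup>*"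
  using rtrancl_mono[OF adj_mono] by blast

lemma adj_edge: "e \<in> Es \<Longrightarrow> f e = {u,v} \<Longrightarrow> (u,v) \<in> (adj f Es)\<^sup>*"
  by (auto simp: adj_def)

lemma classes_bound:
  fixes P :: "'v \<Rightarrow> 'b"
  assumes finEs: "finite Es" and endsV: "\<forall>e\<in>Es. ends e \<subseteq> Vs"
    and conn: "connected_graph Vs ends Es" and finVs: "finite Vs"
  shows "card (P ` Vs) \<le> card {e\<in>Es. \<exists>u v. ends e = {u,v} \<and> P u \<noteq> P v} + 1"
proof -
  have "\<And>P::'v\<Rightarrow>'b. card {e\<in>Es. \<exists>u v. ends e = {u,v} \<and> P u \<noteq> P v} = n \<Longrightarrow>
          card (P ` Vs) \<le> n + 1" for n
  proof (induction n rule: less_induct)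
    case (less n P)
    define D where "D = {e\<in>Es. \<exists>u v. ends e = {u,v} \<and> P u \<noteq> P v}"
    have finD: "finite D" using finEs unfolding D_def by simp
    show ?case
    proof (cases "D = {}")
      case True
      have const: "P x = P y" if "(x,y) \<in> (adj ends Es)\<^sup>*" for x y
        using that
      proof (induction rule: rtrancl_induct)
        case base then show ?case by simp
      next
        case (step y z)
        then obtain e where "e \<in> Es" "ends e = {y,z}" by (auto simp: adj_def)
        note ey = this
        have "e \<notin> D" using True by blast
        hence "P y = P z" using ey unfolding D_def by blast
        thus ?case using step.IH by simp
      qed
      show ?thesis
      proof (cases "Vs = {}")
        case True then show ?thesis by simp
      next
        case False
        then obtain x0 where x0: "x0 \<in> Vs" by blast
        have "P ` Vs \<subseteq> {P x0}" using const conn x0 unfolding connected_graph_def by blast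
        hence "card (P ` Vs) \<le> card {P x0}" using card_mono[of "{P x0}" "P ` Vs"] by blast
        hence "card (P ` Vs) \<le> 1" by simp
        thus ?thesis by simp
      qed
    next
      case False
      then obtain e x y where e: "e \<in> Es" "ends e = {x,y}" "P x \<noteq> P y" unfolding D_def by blast
      have xy: "x \<in> Vs" "y \<in> Vs" using e endsV by auto
      define P' where "P' = (\<lambda>v. if P v = P y then P x else P v)"
      define D' where "D' = {e\<in>Es. \<exists>u v. ends e = {u,v} \<and> P' u \<noteq> P' v}"
      have sub: "D' \<subseteq> D - {e}"
      proof
        fix e' assume "e' \<in> D'"
        then obtain u v where uv: "e' \<in> Es" "ends e' = {u,v}" "P' u \<noteq> P' v" unfolding D'_def by blast
        have "P u \<noteq> P v"
        proof
          assume h: "P u = P v" have "P' u = P' v" unfolding P'_def h by (rule refl) thus False using uv(3) by simp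
        qed
        hence "e' \<in> D" using uv unfolding D_def by blast
        moreover have "e' \<noteq> e"
        proof
          assume "e' = e"
          hence "{u,v} = {x,y}" using uv e by simp
          moreover have "P' x = P' y" using e(3) unfolding P'_def by auto
          ultimately show False using uv(3) by (auto simp: doubleton_eq_iff)
        qed
        ultimately show "e' \<in> D - {e}" by blast
      qed
      have eD: "e \<in> D" using e unfolding D_def by blast
      have "card D' \<le> card (D - {e})" using sub finD by (simp add: card_mono)
      also have "\<dots> < card D" by (rule card_Diff1_less[OF finD eD])
      finally have lt: "card D' < n" using less.prems D_def by simp
      have IH: "card (P' ` Vs) \<le> card D' + 1" using less.IH[OF lt] D'_def by blast
      have img: "P' ` Vs = P ` Vs - {P y}"
      proof
        show "P' ` Vs \<subseteq> P ` Vs - {P y}" using e(3) xy unfolding P'_def by auto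
        show "P ` Vs - {P y} \<subseteq> P' ` Vs"
        proof
          fix z assume "z \<in> P ` Vs - {P y}"
          then obtain v where "v \<in> Vs" "z = P v" "P v \<noteq> P y" by blast
          thus "z \<in> P' ` Vs" unfolding P'_def by force
        qed
      qed
      have "card (P' ` Vs) = card (P ` Vs) - 1" using img xy finVs by simp
      moreover have "card (P ` Vs) \<ge> 1" using xy finVs
        by (metis One_nat_def Suc_leI card_gt_0_iff empty_iff finite_imageI imageI)
      ultimately show ?thesis using IH lt by linarith
    qed
  qed
  thus ?thesis by blast
qed


lemma comp_mem: "y \<in> comp_of Vs f Es x \<longleftrightarrow> y \<in> Vs \<and> (x,y) \<in> (adj f Es)\<^sup>*"
  by (simp add: comp_of_def)

lemma disj_lemma:
  fixes ep :: "nat \<Rightarrow> 'e"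
  assumes st: "spanning_tree W endc Es Tcc" and bij: "bij_betw ep {1..<t} Tcc"
    and i: "i \<in> {1..<t}" and e: "endc (ep i) = {a,b}"
  shows "comp_of W endc (ep`{1..<i}) a \<inter> comp_of W endc (ep`{1..<i}) b = {}"
proof (rule ccontr)
  assume "comp_of W endc (ep`{1..<i}) a \<inter> comp_of W endc (ep`{1..<i}) b \<noteq> {}"
  then obtain C where "(a,C) \<in> (adj endc (ep`{1..<i}))\<^sup>*" "(b,C) \<in> (adj endc (ep`{1..<i}))\<^sup>*"
    by (auto simp: comp_mem)
  hence ab0: "(a,b) \<in> (adj endc (ep`{1..<i}))\<^sup>*" by (meson rtr_sym rtrancl_trans)
  have sub: "ep`{1..<i} \<subseteq> Tcc - {ep i}"
  proof
    fix e' assume "e' \<in> ep`{1..<i}"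
    then obtain j where j: "j \<in> {1..<i}" "e' = ep j" by blast
    have "j \<in> {1..<t}" using j i by auto
    hence "e' \<in> Tcc" using bij j unfolding bij_betw_def by auto
    moreover have "e' \<noteq> ep i"
    proof
      assume "e' = ep i"
      hence "j = i" using j \<open>j \<in> {1..<t}\<close> i bij unfolding bij_betw_def by (metis inj_onD)
      thus False using j by simp
    qed
    ultimately show "e' \<in> Tcc - {ep i}" by blast
  qed
  have ab: "(a,b) \<in> (adj endc (Tcc - {ep i}))\<^sup>*" using rtr_mono[OF sub ab0] .
  have ba: "(b,a) \<in> (adj endc (Tcc - {ep i}))\<^sup>*" using rtr_sym[OF ab] .
  have "adj endc Tcc \<subseteq> (adj endc (Tcc - {ep i}))\<^sup>*"
  proof
    fix p assume "p \<in> adj endc Tcc"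
    then obtain u v e' where p: "p = (u,v)" "e' \<in> Tcc" "endc e' = {u,v}" by (auto simp: adj_def)
    show "p \<in> (adj endc (Tcc - {ep i}))\<^sup>*"
    proof (cases "e' = ep i")
      case True
      hence "{u,v} = {a,b}" using p e by simp
      thus ?thesis using p ab ba by (auto simp: doubleton_eq_iff)
    next
      case False
      thus ?thesis using p by (auto simp: adj_def)
    qed
  qed
  hence "(adj endc Tcc)\<^sup>* \<subseteq> (adj endc (Tcc - {ep i}))\<^sup>*"
    by (metis rtrancl_subset_rtrancl)
  hence "connected_graph W endc (Tcc - {ep i})"
    using st unfolding spanning_tree_def connected_graph_def by blast
  moreover have "Tcc - {ep i} \<subset> Tcc" using bij i unfolding bij_betw_def by auto
  ultimately show False using st unfolding spanning_tree_def by blast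
qed

lemma img_drop:
  assumes "g x = g y" "y \<in> S - {x}" shows "g ` S = g ` (S - {x})"
proof (cases "x \<in> S")
  case True
  then have "S = insert x (S - {x})" by blast
  then have "g ` S = insert (g x) (g ` (S - {x}))" by (metis image_insert)
  moreover have "g x \<in> g ` (S - {x})" using assms by (metis imageI)
  ultimately show ?thesis by (simp add: insert_absorb)
next
  case False then show ?thesis by simp
qed

locale merge =
  fixes W :: "'a set" and endc :: "'e \<Rightarrow> 'a set" and ep :: "nat \<Rightarrow> 'e"
    and L R X :: "nat \<Rightarrow> 'a set" and t :: nat
  assumes LR: "\<forall>i\<in>{1..<t}. \<exists>a b. a\<in>W \<and> b\<in>W \<and> endc (ep i) = {a,b} \<and>
                 L i = comp_of W endc (ep`{1..<i}) a \<and> R i = comp_of W endc (ep`{1..<i}) b"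
    and disj: "\<forall>i\<in>{1..<t}. L i \<inter> R i = {}"
    and XLR: "\<forall>i. X i = L i \<or> X i = R i"
begin

lemma key:
  "Suc n \<le> t \<Longrightarrow> a \<in> W \<Longrightarrow>
     \<exists>A\<in>comp_of W endc (ep`{1..<Suc n}) a. \<forall>i. 1 \<le> i \<and> i < Suc n \<longrightarrow> A \<notin> X i"
proof (induction n arbitrary: a)
  case 0
  have "a \<in> comp_of W endc (ep`{1..<Suc 0}) a" using 0 by (simp add: comp_mem)
  thus ?case by auto
next
  case (Suc n)
  define j where "j = Suc n"
  have jt: "j \<in> {1..<t}" using Suc.prems j_def by auto
  obtain aj bj where ab: "aj\<in>W" "bj\<in>W" "endc (ep j) = {aj,bj}"
    "L j = comp_of W endc (ep`{1..<j}) aj" "R j = comp_of W endc (ep`{1..<j}) bj"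
    using LR jt by blast
  have subS: "ep`{1..<j} \<subseteq> ep`{1..<Suc j}" by auto
  have edge: "(aj,bj) \<in> (adj endc (ep`{1..<Suc j}))\<^sup>*"
    using adj_edge[of "ep j" "ep`{1..<Suc j}" endc aj bj] ab jt by auto
  have edge': "(bj,aj) \<in> (adj endc (ep`{1..<Suc j}))\<^sup>*" using rtr_sym[OF edge] .
  have "\<exists>A\<in>comp_of W endc (ep`{1..<Suc j}) a. \<forall>i. 1 \<le> i \<and> i < Suc j \<longrightarrow> A \<notin> X i"
  proof (cases "(a, aj) \<in> (adj endc (ep`{1..<Suc j}))\<^sup>*")
    case True
    define z where "z = (if X j = L j then bj else aj)"
    have zW: "z \<in> W" using ab z_def by auto
    have LRj: "L j \<inter> R j = {}" using disj jt by blast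
    have Zdisj: "X j \<inter> comp_of W endc (ep`{1..<j}) z = {}"
    proof (cases "X j = L j")
      case True thus ?thesis using LRj ab z_def by simp
    next
      case False thus ?thesis using LRj ab z_def XLR by (metis Int_commute)
    qed
    obtain A where A: "A \<in> comp_of W endc (ep`{1..<j}) z" "\<forall>i. 1 \<le> i \<and> i < j \<longrightarrow> A \<notin> X i"
      using Suc.IH[OF _ zW] Suc.prems j_def by auto
    have "(z, A) \<in> (adj endc (ep`{1..<Suc j}))\<^sup>*" using A(1) rtr_mono[OF subS] by (auto simp: comp_mem)
    moreover have "(aj, z) \<in> (adj endc (ep`{1..<Suc j}))\<^sup>*" using edge z_def by auto
    ultimately have "(a, A) \<in> (adj endc (ep`{1..<Suc j}))\<^sup>*" using True by (meson rtrancl_trans)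
    hence "A \<in> comp_of W endc (ep`{1..<Suc j}) a" using A(1) by (auto simp: comp_mem)
    moreover have "A \<notin> X j" using Zdisj A(1) by blast
    moreover have "\<forall>i. 1 \<le> i \<and> i < Suc j \<longrightarrow> A \<notin> X i" using A(2) calculation(2) less_Suc_eq by auto
    ultimately show ?thesis by blast
  next
    case False
    obtain A where A: "A \<in> comp_of W endc (ep`{1..<j}) a" "\<forall>i. 1 \<le> i \<and> i < j \<longrightarrow> A \<notin> X i"
      using Suc.IH[OF _ Suc.prems(2)] Suc.prems j_def by auto
    have aA: "(a, A) \<in> (adj endc (ep`{1..<Suc j}))\<^sup>*" using A(1) rtr_mono[OF subS] by (auto simp: comp_mem)
    have "A \<notin> X j"
    proof
      assume "A \<in> X j"
      hence "A \<in> L j \<or> A \<in> R j" using XLR by metis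
      hence "(aj, A) \<in> (adj endc (ep`{1..<Suc j}))\<^sup>* \<or> (bj, A) \<in> (adj endc (ep`{1..<Suc j}))\<^sup>*"
        using ab rtr_mono[OF subS, of _ _ endc] by (auto simp: comp_mem)
      hence "(A, aj) \<in> (adj endc (ep`{1..<Suc j}))\<^sup>*"
        using rtr_sym edge' by (meson rtrancl_trans)
      thus False using False aA by (meson rtrancl_trans)
    qed
    have "A \<in> comp_of W endc (ep`{1..<Suc j}) a" using A(1) aA by (auto simp: comp_mem)
    moreover have "\<forall>i. 1 \<le> i \<and> i < Suc j \<longrightarrow> A \<notin> X i" using A(2) \<open>A \<notin> X j\<close> less_Suc_eq by auto
    ultimately show ?thesis by blast
  qed
  from this[unfolded j_def] show ?case .
qed

lemma count:
  assumes finW: "finite W" and Wne: "W \<noteq> {}"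
  shows "\<AA> \<subseteq> {1..<t} \<Longrightarrow> card \<AA> + 1 \<le> card ((\<lambda>C. {i\<in>\<AA>. C \<in> X i}) ` W)"
proof (induction "card \<AA>" arbitrary: \<AA>)
  case 0
  hence "\<AA> = {}" using finite_subset[OF 0(2)] by auto
  hence "(\<lambda>C. {i\<in>\<AA>. C \<in> X i}) ` W = {{}}" using Wne by auto
  thus ?case using 0 by simp
next
  case (Suc n \<AA>)
  have finA: "finite \<AA>" using finite_subset[OF Suc.prems] by simp
  have neA: "\<AA> \<noteq> {}" using Suc.hyps(2) by auto
  define m where "m = Max \<AA>"
  have mA: "m \<in> \<AA>" using finA neA m_def by simp
  have mmax: "\<forall>i\<in>\<AA>. i \<le> m" using finA m_def by simp
  define A' where "A' = \<AA> - {m}"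
  have cA': "n = card A'" using Suc.hyps(2) mA finA A'_def by simp
  have IH: "card A' + 1 \<le> card ((\<lambda>C. {i\<in>A'. C \<in> X i}) ` W)"
    using Suc.hyps(1)[OF cA'] Suc.prems A'_def by auto
  have mt: "m \<in> {1..<t}" using mA Suc.prems by auto
  obtain am bm where ab: "am\<in>W" "bm\<in>W" "endc (ep m) = {am,bm}"
    "L m = comp_of W endc (ep`{1..<m}) am" "R m = comp_of W endc (ep`{1..<m}) bm"
    using LR mt by blast
  define x where "x = (if X m = L m then am else bm)"
  define y where "y = (if X m = L m then bm else am)"
  have xy: "x \<in> W" "y \<in> W" using ab x_def y_def by auto
  have Xm: "X m = comp_of W endc (ep`{1..<m}) x" using XLR ab x_def by metis
  have LRm: "L m \<inter> R m = {}" using disj mt by blast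
  have Ydisj: "X m \<inter> comp_of W endc (ep`{1..<m}) y = {}"
  proof (cases "X m = L m")
    case True thus ?thesis using LRm ab y_def by simp
  next
    case False thus ?thesis using LRm ab y_def XLR by (metis Int_commute)
  qed
  have msuc: "Suc (m - 1) = m" "Suc (m-1) \<le> t" using mt by auto
  obtain a where a: "a \<in> X m" "\<forall>i. 1 \<le> i \<and> i < m \<longrightarrow> a \<notin> X i"
    using key[OF msuc(2) xy(1)] Xm msuc(1) by metis
  obtain b where b: "b \<in> comp_of W endc (ep`{1..<m}) y" "\<forall>i. 1 \<le> i \<and> i < m \<longrightarrow> b \<notin> X i"
    using key[OF msuc(2) xy(2)] msuc(1) by metis
  have bX: "b \<notin> X m" using b(1) Ydisj by blast
  have aW: "a \<in> W" using a(1) Xm by (auto simp: comp_mem)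
  have bW: "b \<in> W" using b(1) by (auto simp: comp_mem)
  let ?Q = "(\<lambda>C. {i\<in>\<AA>. C \<in> X i})"
  let ?Q' = "(\<lambda>C. {i\<in>A'. C \<in> X i})"
  have Qa: "?Q a = {m}"
  proof -
    have "i = m" if "i \<in> \<AA>" "a \<in> X i" for i
    proof -
      have "1 \<le> i" using that Suc.prems by auto
      moreover have "i \<le> m" using mmax that(1) by blast
      ultimately show ?thesis using that(2) a(2) by (metis le_neq_implies_less)
    qed
    moreover have "m \<in> ?Q a" using mA a(1) by simp
    ultimately show ?thesis by blast
  qed
  have Qb: "?Q b = {}"
  proof -
    have False if "i \<in> \<AA>" "b \<in> X i" for i
    proof -
      have "1 \<le> i" using that Suc.prems by auto
      moreover have "i \<le> m" using mmax that(1) by blast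
      ultimately show ?thesis using that(2) b(2) bX by (metis le_neq_implies_less)
    qed
    thus ?thesis by blast
  qed
  define g where "g = (\<lambda>S::nat set. S - {m})"
  have gimg: "g ` (?Q ` W) = ?Q' ` W" unfolding g_def A'_def by (auto simp: image_image) 
  have ne: "{m} \<noteq> {}" by simp
  have fin: "finite (?Q ` W)" using finW by simp
  have "g ` (?Q ` W) = g ` (?Q ` W - {{m}})"
  proof -
    have "g {m} = g {}" unfolding g_def by simp
    moreover have "{} \<in> ?Q ` W - {{m}}" using Qb bW by force
    ultimately show ?thesis by (rule img_drop)
  qed
  hence eqq: "?Q' ` W = g ` (?Q ` W - {{m}})" using gimg by simp
  have finD: "finite (?Q ` W - {{m}})" using fin by blast
  have "card (?Q' ` W) \<le> card (?Q ` W - {{m}})" unfolding eqq by (rule card_image_le[OF finD])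
  moreover have "card (?Q ` W - {{m}}) = card (?Q ` W) - 1"
  proof -
    have "?Q a \<in> ?Q ` W" using aW by (rule imageI)
    hence "{m} \<in> ?Q ` W" unfolding Qa .
    thus ?thesis by (rule card_Diff_singleton)
  qed
  moreover have "card A' + 1 = card \<AA>" using Suc.hyps(2) cA' by simp
  ultimately show ?case using IH by linarith
qed

end

theorem mainTheorem12:
  fixes V :: "'v set" and E :: "'e set" and ends :: "'e \<Rightarrow> 'v set"
    and w :: "'e \<Rightarrow> real" and c :: "'e \<Rightarrow> real"
    and F T Tcc :: "'e set" and ep :: "nat \<Rightarrow> 'e"
    and L R :: "nat \<Rightarrow> 'v set set"
  assumes finV: "finite V" and finE: "finite E"
    and ends_ok: "\<forall>e\<in>E. ends e \<subseteq> V \<and> card (ends e) = 2"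
    and connG: "connected_graph V ends E"
    and w_nonneg: "\<forall>e\<in>E. 0 \<le> w e" and c_pos: "\<forall>e\<in>E. 0 < c e"
    and FE: "F \<subseteq> E"
    and connG': "connected_graph V ends (E - F)"
    and T_MST: "is_MST V ends E w T"
    and t_ge2: "2 \<le> card {comp_of V ends (T - F) v | v. v \<in> V}"
    and Tcc_MST: "is_MST {comp_of V ends (T - F) v | v. v \<in> V}
                    (\<lambda>e. comp_of V ends (T - F) ` ends e) (E - F) w Tcc"
    and ep_bij: "bij_betw ep {1..<card {comp_of V ends (T - F) v | v. v \<in> V}} Tcc"
    and ep_sorted: "\<forall>i j. 1 \<le> i \<and> i \<le> j \<and> j < card {comp_of V ends (T - F) v | v. v \<in> V}
                      \<longrightarrow> w (ep i) \<le> w (ep j)"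
    and LR: "\<forall>i\<in>{1..<card {comp_of V ends (T - F) v | v. v \<in> V}}. \<exists>a b.
               comp_of V ends (T - F) ` ends (ep i) = {a, b} \<and>
               L i = comp_of {comp_of V ends (T - F) v | v. v \<in> V}
                       (\<lambda>e. comp_of V ends (T - F) ` ends e) (ep ` {1..<i}) a \<and>
               R i = comp_of {comp_of V ends (T - F) v | v. v \<in> V}
                       (\<lambda>e. comp_of V ends (T - F) ` ends e) (ep ` {1..<i}) b"
  shows "\<forall>k\<in>{1..card {comp_of V ends (T - F) v | v. v \<in> V} - 1}. \<forall>\<A>.
           \<A> \<subseteq> {1..<card {comp_of V ends (T - F) v | v. v \<in> V}} \<and> card \<A> = k \<longrightarrow>
           k \<le> card {e \<in> F \<inter> T. \<exists>i\<in>\<A>. crosses ends (\<Union> (Xsel L R i)) e}"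
proof -
  define cmp where "cmp = comp_of V ends (T - F)"
  define W where "W = {cmp v | v. v \<in> V}"
  define t where "t = card W"
  define endc where "endc = (\<lambda>e. cmp ` ends e)"
  define X where "X = Xsel L R"
  have WV: "W = cmp ` V" unfolding W_def by blast
  have finW: "finite W" using WV finV by simp
  have W_eq: "{comp_of V ends (T - F) v | v. v \<in> V} = W" by (simp add: W_def cmp_def)
  have endc_eq: "(\<lambda>e. comp_of V ends (T - F) ` ends e) = endc" by (simp add: endc_def cmp_def)
  have endc_app: "cmp ` ends e = endc e" for e by (simp add: endc_def)
  have t_eq: "card W = t" by (simp add: t_def)
  have t2: "2 \<le> t" using t_ge2 unfolding W_eq t_eq .
  have Wne: "W \<noteq> {}"
  proof
    assume "W = {}" hence "t = 0" unfolding t_def by simp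
    thus False using t2 by simp
  qed
  have st: "spanning_tree W endc (E - F) Tcc"
    using Tcc_MST unfolding W_eq endc_eq is_MST_def by (rule conjunct1)
  have bij: "bij_betw ep {1..<t} Tcc" using ep_bij unfolding W_eq t_eq .
  have TccE: "Tcc \<subseteq> E - F" using st unfolding spanning_tree_def by (rule conjunct1)
  have LR1: "\<forall>i\<in>{1..<t}. \<exists>a b. endc (ep i) = {a, b} \<and>
               L i = comp_of W endc (ep ` {1..<i}) a \<and> R i = comp_of W endc (ep ` {1..<i}) b"
    using LR unfolding W_eq endc_eq t_eq cmp_def[symmetric] endc_app
    unfolding W_def[symmetric] unfolding t_def[symmetric] .
  have LR2: "\<forall>i\<in>{1..<t}. \<exists>a b. a\<in>W \<and> b\<in>W \<and> endc (ep i) = {a,b} \<and>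
                 L i = comp_of W endc (ep`{1..<i}) a \<and> R i = comp_of W endc (ep`{1..<i}) b"
  proof
    fix i assume i: "i \<in> {1..<t}"
    then obtain a b where ab: "endc (ep i) = {a, b}" "L i = comp_of W endc (ep ` {1..<i}) a"
      "R i = comp_of W endc (ep ` {1..<i}) b" using LR1[rule_format, OF i] by blast
    have "ep i \<in> Tcc" using bij_betwE[OF bij] i by blast
    hence "ep i \<in> E" using TccE by blast
    hence "ends (ep i) \<subseteq> V" using ends_ok by blast
    hence "endc (ep i) \<subseteq> W" unfolding endc_def WV by (rule image_mono)
    hence "a \<in> W" "b \<in> W" using ab(1) by auto
    thus "\<exists>a b. a\<in>W \<and> b\<in>W \<and> endc (ep i) = {a,b} \<and>
                 L i = comp_of W endc (ep`{1..<i}) a \<and> R i = comp_of W endc (ep`{1..<i}) b"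
      using ab by blast
  qed
  have disj: "\<forall>i\<in>{1..<t}. L i \<inter> R i = {}"
  proof
    fix i assume i: "i \<in> {1..<t}"
    then obtain a b where ab: "endc (ep i) = {a, b}" "L i = comp_of W endc (ep ` {1..<i}) a"
      "R i = comp_of W endc (ep ` {1..<i}) b" using LR1[rule_format, OF i] by blast
    show "L i \<inter> R i = {}" using disj_lemma[OF st bij i ab(1)] ab by simp
  qed
  have XLR: "\<forall>i. X i = L i \<or> X i = R i" unfolding X_def Xsel_def by auto
  interpret merge W endc ep L R X t using LR2 disj XLR by unfold_locales
  have XW: "X i \<subseteq> W" if "i \<in> {1..<t}" for i
    using LR2 that XLR by (metis comp_mem subsetI)
  have cmp_self: "v \<in> cmp v" if "v \<in> V" for v using that unfolding cmp_def by (simp add: comp_mem)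
  have cmp_eq: "cmp v = cmp u" if "v \<in> cmp u" for u v
  proof -
    have uv: "(u,v) \<in> (adj ends (T-F))\<^sup>*" using that unfolding cmp_def by (simp add: comp_mem)
    have vu: "(v,u) \<in> (adj ends (T-F))\<^sup>*" using rtr_sym[OF uv] .
    show ?thesis
    proof (rule set_eqI)
      fix y
      have "(v,y) \<in> (adj ends (T-F))\<^sup>* \<longleftrightarrow> (u,y) \<in> (adj ends (T-F))\<^sup>*"
        using uv vu rtrancl_trans[of v u _ y] rtrancl_trans[of u v _ y] by blast
      thus "y \<in> cmp v \<longleftrightarrow> y \<in> cmp u" unfolding cmp_def comp_mem by blast
    qed
  qed
  have memb: "v \<in> \<Union>(X i) \<longleftrightarrow> cmp v \<in> X i" if vV: "v \<in> V" and iT: "i \<in> {1..<t}" for v i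
  proof
    assume "v \<in> \<Union>(X i)"
    then obtain C where C: "C \<in> X i" "v \<in> C" by blast
    then obtain u where "C = cmp u" using XW[OF iT] WV by blast
    thus "cmp v \<in> X i" using C cmp_eq by simp
  next
    assume "cmp v \<in> X i" thus "v \<in> \<Union>(X i)" using cmp_self[OF vV] by blast
  qed
  have TE: "T \<subseteq> E" and connT: "connected_graph V ends T"
    using T_MST unfolding is_MST_def spanning_tree_def by auto
  have finT: "finite T" using TE finE finite_subset by blast
  have endsT: "\<forall>e\<in>T. ends e \<subseteq> V" using TE ends_ok by blast
  have main: "k \<le> card {e \<in> F \<inter> T. \<exists>i\<in>\<A>. crosses ends (\<Union> (X i)) e}"
    if A: "\<A> \<subseteq> {1..<t}" "card \<A> = k" for k \<A>
  proof -
    define Q where "Q = (\<lambda>C. {i\<in>\<A>. C \<in> X i})"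
    define P where "P = (\<lambda>v. Q (cmp v))"
    have c1: "card \<A> + 1 \<le> card (Q ` W)" using count[OF finW Wne A(1)] unfolding Q_def .
    have PV: "P ` V = Q ` W" unfolding P_def WV by (simp add: image_image)
    have c2: "card (P ` V) \<le> card {e\<in>T. \<exists>u v. ends e = {u,v} \<and> P u \<noteq> P v} + 1"
      using classes_bound[OF finT endsT connT finV] .
    have sub: "{e\<in>T. \<exists>u v. ends e = {u,v} \<and> P u \<noteq> P v} \<subseteq>
               {e \<in> F \<inter> T. \<exists>i\<in>\<A>. crosses ends (\<Union> (X i)) e}"
    proof
      fix e assume "e \<in> {e\<in>T. \<exists>u v. ends e = {u,v} \<and> P u \<noteq> P v}"
      then obtain u v where e: "e \<in> T" "ends e = {u,v}" "P u \<noteq> P v" by blast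
      have uvV: "u \<in> V" "v \<in> V" using e endsT by auto
      have uv: "u \<noteq> v" using e by auto
      obtain i where i: "i \<in> \<A>" "\<not> (cmp u \<in> X i \<longleftrightarrow> cmp v \<in> X i)"
        using e(3) unfolding P_def Q_def by blast
      have it: "i \<in> {1..<t}" using i A by blast
      have xor: "\<not> (u \<in> \<Union>(X i) \<longleftrightarrow> v \<in> \<Union>(X i))" using i memb[OF uvV(1) it] memb[OF uvV(2) it] by blast
      have "ends e \<inter> \<Union>(X i) = {u} \<or> ends e \<inter> \<Union>(X i) = {v}" using xor e(2) by auto
      hence cr: "crosses ends (\<Union> (X i)) e" unfolding crosses_def by auto
      have "e \<in> F"
      proof (rule ccontr)
        assume "e \<notin> F"
        hence "(u,v) \<in> (adj ends (T-F))\<^sup>*" using adj_edge[of e "T-F" ends u v] e by auto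
        hence "v \<in> cmp u" using uvV unfolding cmp_def by (simp add: comp_mem)
        hence "cmp v = cmp u" by (rule cmp_eq)
        thus False using e(3) unfolding P_def by simp
      qed
      thus "e \<in> {e \<in> F \<inter> T. \<exists>i\<in>\<A>. crosses ends (\<Union> (X i)) e}" using e(1) i(1) cr by blast
    qed
    have "finite {e \<in> F \<inter> T. \<exists>i\<in>\<A>. crosses ends (\<Union> (X i)) e}" using finT by simp
    hence "card {e\<in>T. \<exists>u v. ends e = {u,v} \<and> P u \<noteq> P v} \<le>
               card {e \<in> F \<inter> T. \<exists>i\<in>\<A>. crosses ends (\<Union> (X i)) e}" using sub card_mono by blast
    moreover have "card (Q ` W) \<le> card {e\<in>T. \<exists>u v. ends e = {u,v} \<and> P u \<noteq> P v} + 1"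
      using c2 unfolding PV .
    ultimately show ?thesis using c1 A(2) by linarith
  qed
  show ?thesis using main unfolding t_def W_def cmp_def X_def by blast
qed

end
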